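(* Let $X$ be a real Banach space, let $c>0$ and let $(x_k)$ be a weakly null sequence in $X$ with $\widetilde{\operatorname{wu}}(x_k)>c$. Then there is a subsequence of $(x_k)$ generating an $\ell_1$-spreading model with constant $\frac c2$.
   Context: For a sequence $(y_k)$ weakly converging to $y$, $\operatorname{wu}(y_k)$ is the infimum of all $\varepsilon>0$ for which there is $n\in\mathbb N$ with $\#\{k\in\mathbb N:|x^*(y_k-y)|>\varepsilon\}\le n$ for all $x^*\in B_{X^*}$; $\widetilde{\operatorname{wu}}(x_k)=\inf\{\operatorname{wu}(x_{k_n}):(x_{k_n})\text{ a subsequence of }(x_k)\}$. A bounded sequence $(z_k)$ generates an $\ell_1$-spreading model with constant $\delta>0$ if $\|\sum_{i\in F}\alpha_i z_i\|\ge\delta\sum_{i\in F}|\alpha_i|$ for every finite $F\subset\mathbb N$ with $\#F\le\min F$ and all real scalars $(\alpha_i)_{i\in F}$. *)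

theory Defs
  imports "HOL-Analysis.Analysis"
begin

definition weakly_converges :: "(nat \<Rightarrow> 'a::real_normed_vector) \<Rightarrow> 'a \<Rightarrow> bool" where
  "weakly_converges x y \<longleftrightarrow>
     (\<forall>f :: 'a \<Rightarrow>\<^sub>L real. (\<lambda>k. blinfun_apply f (x k)) \<longlonglongrightarrow> blinfun_apply f y)"

text \<open>wu(y_k) for a sequence converging weakly to y; valued in ereal so the infimum
  over an empty set would be \<infinity> (it is never empty for weakly convergent sequences).\<close>
definition wu :: "(nat \<Rightarrow> 'a::real_normed_vector) \<Rightarrow> 'a \<Rightarrow> ereal" where
  "wu x y = Inf {ereal \<epsilon> | \<epsilon>. \<epsilon> > 0 \<and>
      (\<exists>n::nat. \<forall>f :: 'a \<Rightarrow>\<^sub>L real. norm f \<le> 1 \<longrightarrow>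
         finite {k. \<bar>blinfun_apply f (x k - y)\<bar> > \<epsilon>} \<and>
         card {k. \<bar>blinfun_apply f (x k - y)\<bar> > \<epsilon>} \<le> n)}"

definition wu_tilde :: "(nat \<Rightarrow> 'a::real_normed_vector) \<Rightarrow> 'a \<Rightarrow> ereal" where
  "wu_tilde x y = Inf {wu (x \<circ> r) y | r. strict_mono r}"

text \<open>The paper indexes sequences from 1; Isabelle sequences
  are indexed from 0, so the paper's index i corresponds to Isabelle index i-1 and
  the condition #F \<le> min F becomes card F \<le> Min F + 1.\<close>
definition generates_l1_spreading_model :: "(nat \<Rightarrow> 'a::real_normed_vector) \<Rightarrow> real \<Rightarrow> bool" where
  "generates_l1_spreading_model z \<delta> \<longleftrightarrow>
     bounded (range z) \<and>
     (\<forall>F::nat set. \<forall>\<alpha>::nat \<Rightarrow> real. finite F \<and> F \<noteq> {} \<and> card F \<le> Min F + 1 \<longrightarrow>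
        norm (\<Sum>i\<in>F. \<alpha> i *\<^sub>R z i) \<ge> \<delta> * (\<Sum>i\<in>F. \<bar>\<alpha> i\<bar>))"

end

theory Submission
  imports Defs
begin
definition pgraph :: "('a::real_vector \<Rightarrow> real) \<Rightarrow> ('a \<times> real) set \<Rightarrow> bool" where
 "pgraph p G \<longleftrightarrow> (\<forall>x a b. (x,a)\<in>G \<longrightarrow> (x,b)\<in>G \<longrightarrow> a=b) \<and> (0,0)\<in>G \<and>
    (\<forall>x a y b. (x,a)\<in>G \<longrightarrow> (y,b)\<in>G \<longrightarrow> (x+y,a+b)\<in>G) \<and>
    (\<forall>x a t. (x,a)\<in>G \<longrightarrow> (t *\<^sub>R x, t*a)\<in>G) \<and> (\<forall>x a. (x,a)\<in>G \<longrightarrow> a \<le> p x)"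

lemma pgraph_chain:
  assumes "C \<in> chains {G. pgraph p G}" "C \<noteq> {}"
  shows "pgraph p (\<Union>C)"
proof -
  have sub: "\<And>G. G \<in> C \<Longrightarrow> pgraph p G" using assms(1) chainsD2 by blast
  have tot: "\<And>G H. G\<in>C \<Longrightarrow> H\<in>C \<Longrightarrow> G \<subseteq> H \<or> H \<subseteq> G" using assms(1) chainsD by blast
  have two: "\<exists>K\<in>C. (x,a)\<in>K \<and> (y,b)\<in>K" if "(x,a)\<in>\<Union>C" "(y,b)\<in>\<Union>C" for x a y b
  proof -
    from that(1) obtain G where "G\<in>C" "(x,a)\<in>G" by blast
    moreover from that(2) obtain H where "H\<in>C" "(y,b)\<in>H" by blast
    ultimately show ?thesis using tot[of G H] by blast
  qed
  show ?thesis unfolding pgraph_def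
  proof (intro conjI allI impI)
    fix x a b assume "(x,a)\<in>\<Union>C" "(x,b)\<in>\<Union>C"
    then obtain K where "K\<in>C" "(x,a)\<in>K" "(x,b)\<in>K" using two by blast
    then show "a=b" using sub[of K] unfolding pgraph_def by blast
  next
    show "(0,0)\<in>\<Union>C" using assms(2) sub unfolding pgraph_def by blast
  next
    fix x a y b assume "(x,a)\<in>\<Union>C" "(y,b)\<in>\<Union>C"
    then obtain K where "K\<in>C" "(x,a)\<in>K" "(y,b)\<in>K" using two by blast
    then show "(x+y,a+b)\<in>\<Union>C" using sub[of K] unfolding pgraph_def by blast
  next
    fix x a t assume "(x,a)\<in>\<Union>C"
    then obtain K where "K\<in>C" "(x,a)\<in>K" by blast
    then show "(t *\<^sub>R x, t*a)\<in>\<Union>C" using sub[of K] unfolding pgraph_def by blast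
  next
    fix x a assume "(x,a)\<in>\<Union>C"
    then obtain K where "K\<in>C" "(x,a)\<in>K" by blast
    then show "a \<le> p x" using sub[of K] unfolding pgraph_def by blast
  qed
qed

lemma pgraph_extend:
  fixes p :: "'a::real_vector \<Rightarrow> real"
  assumes subadd: "\<And>x y. p (x+y) \<le> p x + p y"
    and hom: "\<And>x t. t > 0 \<Longrightarrow> p (t *\<^sub>R x) = t * p x"
    and G: "pgraph p G" and x0: "x0 \<notin> fst ` G"
  shows "\<exists>G'. pgraph p G' \<and> G \<subseteq> G' \<and> G' \<noteq> G"
proof -
  have fn: "\<And>x a b. (x,a)\<in>G \<Longrightarrow> (x,b)\<in>G \<Longrightarrow> a=b"
   and z: "(0,0)\<in>G"
   and ad: "\<And>x a y b. (x,a)\<in>G \<Longrightarrow> (y,b)\<in>G \<Longrightarrow> (x+y,a+b)\<in>G"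
   and sc: "\<And>x a t. (x,a)\<in>G \<Longrightarrow> (t *\<^sub>R x, t*a)\<in>G"
   and dom: "\<And>x a. (x,a)\<in>G \<Longrightarrow> a \<le> p x" using G unfolding pgraph_def by blast+
  define L where "L = {a - p (d - x0) | d a. (d,a)\<in>G}"
  have key: "a - p (d - x0) \<le> p (e + x0) - b" if "(d,a)\<in>G" "(e,b)\<in>G" for d a e b
  proof -
    have "a + b \<le> p (d + e)" using dom[OF ad[OF that]] .
    also have "d + e = (d - x0) + (e + x0)" by simp
    also have "p ((d - x0) + (e + x0)) \<le> p (d - x0) + p (e + x0)" by (rule subadd)
    finally show ?thesis by simp
  qed
  have Lne: "L \<noteq> {}" using z unfolding L_def by blast
  have Lbdd: "bdd_above L" unfolding L_def bdd_above_def using key[OF _ z] by auto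
  define c where "c = Sup L"
  have c1: "a - p (d - x0) \<le> c" if "(d,a)\<in>G" for d a
    unfolding c_def by (rule cSup_upper[OF _ Lbdd]) (use that L_def in blast)
  have c2: "c \<le> p (e + x0) - b" if "(e,b)\<in>G" for e b
    unfolding c_def by (rule cSup_least[OF Lne]) (use key[OF _ that] L_def in blast)
  define G' where "G' = {(d + t *\<^sub>R x0, a + t * c) | d a t. (d,a)\<in>G}"
  have inj: "d = d' \<and> t = t'" if "(d,a)\<in>G" "(d',a')\<in>G" "d + t *\<^sub>R x0 = d' + t' *\<^sub>R x0" for d a d' a' t t'
  proof (cases "t = t'")
    case True then show ?thesis using that by simp
  next
    case False
    have "(t - t') *\<^sub>R x0 = d' - d" using that(3) by (simp add: algebra_simps)
    then have "(1/(t-t')) *\<^sub>R ((t - t') *\<^sub>R x0) = (1/(t-t')) *\<^sub>R (d' + (-1) *\<^sub>R d)" by simp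
    then have "x0 = (1/(t-t')) *\<^sub>R (d' + (-1) *\<^sub>R d)" using False by simp
    moreover have "(d' + (-1) *\<^sub>R d, a' + (-1)*a) \<in> G" using ad[OF that(2) sc[OF that(1)]] .
    ultimately have "(x0, (1/(t-t')) * (a' + (-1)*a)) \<in> G" using sc by metis
    then show ?thesis using x0 by force
  qed
  have pg: "pgraph p G'" unfolding pgraph_def
  proof (intro conjI allI impI)
    fix x a b assume "(x,a)\<in>G'" "(x,b)\<in>G'"
    then obtain d1 a1 t1 d2 a2 t2 where h: "(d1,a1)\<in>G" "(d2,a2)\<in>G" "x = d1 + t1 *\<^sub>R x0" "x = d2 + t2 *\<^sub>R x0"
       "a = a1 + t1 * c" "b = a2 + t2*c" unfolding G'_def by blast
    then have "d1 = d2 \<and> t1 = t2" using inj by metis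
    then show "a = b" using h fn by metis
  next
    show "(0,0)\<in>G'" unfolding G'_def using z by force
  next
    fix x a y b assume "(x,a)\<in>G'" "(y,b)\<in>G'"
    then obtain d1 a1 t1 d2 a2 t2 where h: "(d1,a1)\<in>G" "(d2,a2)\<in>G" "x = d1 + t1 *\<^sub>R x0" "y = d2 + t2 *\<^sub>R x0"
       "a = a1 + t1 * c" "b = a2 + t2*c" unfolding G'_def by blast
    have "(d1+d2, a1+a2)\<in>G" using ad h by blast
    moreover have "x + y = (d1+d2) + (t1+t2) *\<^sub>R x0" "a + b = (a1+a2) + (t1+t2)*c"
      using h by (auto simp: algebra_simps)
    ultimately show "(x+y, a+b)\<in>G'" unfolding G'_def by blast
  next
    fix x a t assume "(x,a)\<in>G'"
    then obtain d1 a1 t1 where h: "(d1,a1)\<in>G" "x = d1 + t1 *\<^sub>R x0" "a = a1 + t1 * c" unfolding G'_def by blast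
    have "(t *\<^sub>R d1, t*a1)\<in>G" using sc h by blast
    moreover have "t *\<^sub>R x = t *\<^sub>R d1 + (t*t1) *\<^sub>R x0" "t * a = t*a1 + (t*t1)*c"
      using h by (auto simp: algebra_simps)
    ultimately show "(t *\<^sub>R x, t*a)\<in>G'" unfolding G'_def by blast
  next
    fix x a assume "(x,a)\<in>G'"
    then obtain d a1 t where h: "(d,a1)\<in>G" "x = d + t *\<^sub>R x0" "a = a1 + t * c" unfolding G'_def by blast
    consider "t = 0" | "t > 0" | "t < 0" by linarith
    then show "a \<le> p x"
    proof cases
      case 1 then show ?thesis using h dom by simp
    next
      case 2
      have "((1/t) *\<^sub>R d, (1/t)*a1) \<in> G" using sc h by blast
      from c2[OF this] have "c \<le> p ((1/t) *\<^sub>R d + x0) - (1/t)*a1" .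
      then have "t * c \<le> t * (p ((1/t) *\<^sub>R d + x0) - (1/t)*a1)" using 2
        by (simp add: mult_left_mono)
      then have "t * c \<le> t * p ((1/t) *\<^sub>R d + x0) - a1" using 2
        by (simp add: right_diff_distrib)
      also have "t * p ((1/t) *\<^sub>R d + x0) = p (t *\<^sub>R ((1/t) *\<^sub>R d + x0))" using hom 2 by simp
      also have "t *\<^sub>R ((1/t) *\<^sub>R d + x0) = x" using h 2 by (simp add: scaleR_add_right)
      finally show ?thesis using h by simp
    next
      case 3
      define s where "s = - t"
      have s: "s > 0" using 3 s_def by simp
      have "((1/s) *\<^sub>R d, (1/s)*a1) \<in> G" using sc h by blast
      from c1[OF this] have "(1/s)*a1 - p ((1/s) *\<^sub>R d - x0) \<le> c" .
      then have "a1 - s * p ((1/s) *\<^sub>R d - x0) \<le> s * c" using s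
        by (simp add: field_simps)
      also have "s * p ((1/s) *\<^sub>R d - x0) = p (s *\<^sub>R ((1/s) *\<^sub>R d - x0))" using hom s by simp
      also have "s *\<^sub>R ((1/s) *\<^sub>R d - x0) = x" using h s s_def by (simp add: scaleR_diff_right)
      finally show ?thesis using h s_def by simp
    qed
  qed
  have "G \<subseteq> G'" unfolding G'_def by force
  moreover have "(x0, c) \<in> G'" unfolding G'_def using z by force
  ultimately show ?thesis using pg x0 by force
qed

lemma hahn_banach_sublinear:
  fixes p :: "'a::real_vector \<Rightarrow> real"
  assumes subadd: "\<And>x y. p (x+y) \<le> p x + p y"
    and hom: "\<And>x t. t > 0 \<Longrightarrow> p (t *\<^sub>R x) \<le> t * p x"
  shows "\<exists>f. linear f \<and> (\<forall>x. f x \<le> p x)"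
proof -
  have hom': "p (t *\<^sub>R x) = t * p x" if "t > 0" for x t
  proof -
    have "p x = p ((1/t) *\<^sub>R (t *\<^sub>R x))" using that by simp
    also have "\<dots> \<le> (1/t) * p (t *\<^sub>R x)" by (rule hom) (use that in simp)
    finally have "p x \<le> (1/t) * p (t *\<^sub>R x)" .
    then have "t * p x \<le> t * ((1/t) * p (t *\<^sub>R x))" using that by (intro mult_left_mono) auto
    then have "t * p x \<le> p (t *\<^sub>R x)" using that by simp
    then show ?thesis using hom[OF that, of x] by linarith
  qed
  have "\<exists>M\<in>{G. pgraph p G}. \<forall>X\<in>{G. pgraph p G}. M \<subseteq> X \<longrightarrow> X = M"
  proof (rule Zorn_Lemma2, intro ballI)
    fix C assume C: "C \<in> chains {G. pgraph p G}"
    show "\<exists>U\<in>{G. pgraph p G}. \<forall>X\<in>C. X \<subseteq> U"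
    proof (cases "C = {}")
      case True
      have "p 0 = 2 * p 0" using hom'[of 2 0] by simp
      then have "pgraph p {(0,0)}" unfolding pgraph_def by simp
      then show ?thesis using True by blast
    next
      case False
      then show ?thesis using pgraph_chain[OF C False] by blast
    qed
  qed
  then obtain G where G: "pgraph p G" and max: "\<And>X. pgraph p X \<Longrightarrow> G \<subseteq> X \<Longrightarrow> X = G" by blast
  have all: "\<exists>a. (x,a)\<in>G" for x
  proof (rule ccontr)
    assume "\<nexists>a. (x, a) \<in> G"
    then have "x \<notin> fst ` G" by force
    from pgraph_extend[OF subadd hom' G this] max show False by blast
  qed
  define f where "f x = (THE a. (x,a)\<in>G)" for x
  have fG: "(x, f x) \<in> G" for x
  proof -
    obtain a where a: "(x,a)\<in>G" using all by blast
    have "(THE a. (x,a)\<in>G) = a" by (rule the_equality) (use G a in \<open>auto simp: pgraph_def\<close>)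
    then show ?thesis using a f_def by simp
  qed
  have uniq: "\<And>x a. (x,a)\<in>G \<Longrightarrow> f x = a" using fG G unfolding pgraph_def by blast
  have "linear f"
  proof (rule linearI)
    fix x y show "f (x+y) = f x + f y" using G fG uniq unfolding pgraph_def by blast
  next
    fix r x show "f (r *\<^sub>R x) = r *\<^sub>R f x" using G fG uniq unfolding pgraph_def by force
  qed
  moreover have "\<forall>x. f x \<le> p x" using G fG unfolding pgraph_def by blast
  ultimately show ?thesis by blast
qed

lemma separation:
  fixes C :: "'a::real_normed_vector set"
  assumes cvx: "convex C" and ne: "C \<noteq> {}" and d: "\<delta> > 0" and far: "\<And>c. c\<in>C \<Longrightarrow> \<delta> \<le> norm c"
  shows "\<exists>f::'a \<Rightarrow>\<^sub>L real. norm f \<le> 1 \<and> (\<forall>c\<in>C. \<delta> \<le> blinfun_apply f c)"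
proof -
  define S where "S x = {norm (x + t *\<^sub>R c) - t*\<delta> | t c. t \<ge> 0 \<and> c \<in> C}" for x
  define p where "p x = Inf (S x)" for x
  obtain c0 where c0: "c0 \<in> C" using ne by blast
  have Sin: "norm (x + t *\<^sub>R c) - t*\<delta> \<in> S x" if "t \<ge> 0" "c \<in> C" for x t c
    unfolding S_def using that by blast
  have Sne: "S x \<noteq> {}" for x using Sin[of 0 c0 x] c0 by blast
  have Slow: "- norm x \<le> u" if uS: "u \<in> S x" for x u
  proof -
    obtain t c where tc: "t \<ge> 0" "c\<in>C" "u = norm (x + t *\<^sub>R c) - t*\<delta>" using uS unfolding S_def by auto
    have "t * \<delta> \<le> t * norm c" using tc far[OF tc(2)] by (simp add: mult_left_mono)
    also have "t * norm c = norm (t *\<^sub>R c)" using tc by simp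
    also have "norm (t *\<^sub>R c) \<le> norm (x + t *\<^sub>R c) + norm x" using norm_triangle_ineq4[of "x + t *\<^sub>R c" x] by simp
    finally have "t * \<delta> \<le> norm (x + t *\<^sub>R c) + norm x" .
    then show ?thesis using tc(3) by linarith
  qed
  have Sbdd: "bdd_below (S x)" for x by (rule bdd_belowI[of _ "- norm x"]) (rule Slow)
  have plow: "p x \<le> u" if "u \<in> S x" for x u unfolding p_def using that Sbdd by (rule cInf_lower)
  have pgr: "v \<le> p x" if "\<And>u. u \<in> S x \<Longrightarrow> v \<le> u" for x v
    unfolding p_def using Sne that by (rule cInf_greatest)
  have pnorm: "p x \<le> norm x" for x using plow[OF Sin[of 0 c0 x]] c0 by simp
  have pc: "p (- c) \<le> - \<delta>" if "c \<in> C" for c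
    using plow[OF Sin[of 1 c "-c"]] that by simp
  have subadd: "p (x+y) \<le> p x + p y" for x y
  proof -
    have "p (x+y) \<le> u + v" if u: "u \<in> S x" and v: "v \<in> S y" for u v
    proof -
      obtain t1 c1 where 1: "t1 \<ge> 0" "c1\<in>C" "u = norm (x + t1 *\<^sub>R c1) - t1*\<delta>" using u unfolding S_def by blast
      obtain t2 c2 where 2: "t2 \<ge> 0" "c2\<in>C" "v = norm (y + t2 *\<^sub>R c2) - t2*\<delta>" using v unfolding S_def by blast
      show ?thesis
      proof (cases "t1 + t2 = 0")
        case True
        then have "t1 = 0" "t2 = 0" using 1 2 by auto
        then have "u + v = norm x + norm y" using 1 2 by simp
        then show ?thesis using pnorm[of "x+y"] norm_triangle_ineq[of x y] by linarith
      next
        case False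
        then have tp: "t1 + t2 > 0" using 1 2 by linarith
        define c where "c = (t1/(t1+t2)) *\<^sub>R c1 + (t2/(t1+t2)) *\<^sub>R c2"
        have s1: "t1/(t1+t2) + t2/(t1+t2) = 1" using tp by (simp add: add_divide_distrib[symmetric])
        have "c \<in> C" unfolding c_def
          by (rule convexD[OF cvx 1(2) 2(2)]) (use 1 2 tp s1 in auto)
        have e: "(t1+t2) *\<^sub>R c = t1 *\<^sub>R c1 + t2 *\<^sub>R c2" unfolding c_def using tp
          by (simp add: scaleR_add_right)
        have "norm ((x+y) + (t1+t2) *\<^sub>R c) - (t1+t2)*\<delta> \<in> S (x+y)"
          using Sin \<open>c\<in>C\<close> tp by simp
        then have "p (x+y) \<le> norm ((x+y) + (t1+t2) *\<^sub>R c) - (t1+t2)*\<delta>" by (rule plow)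
        also have "(x+y) + (t1+t2) *\<^sub>R c = (x + t1 *\<^sub>R c1) + (y + t2 *\<^sub>R c2)" using e by (simp add: algebra_simps)
        also have "norm \<dots> \<le> norm (x + t1 *\<^sub>R c1) + norm (y + t2 *\<^sub>R c2)" by (rule norm_triangle_ineq)
        finally show ?thesis using 1 2 by (simp add: algebra_simps)
      qed
    qed
    then have "p (x+y) - v \<le> p x" if "v \<in> S y" for v using that by (intro pgr) (simp add: algebra_simps)
    then have "p (x+y) - p x \<le> p y" by (intro pgr) (simp add: algebra_simps)
    then show ?thesis by simp
  qed
  have hom: "p (t *\<^sub>R x) \<le> t * p x" if t: "t > 0" for x t
  proof -
    have "p (t *\<^sub>R x) / t \<le> u" if u: "u \<in> S x" for u
    proof -
      obtain s c where 1: "s \<ge> 0" "c\<in>C" "u = norm (x + s *\<^sub>R c) - s*\<delta>" using u unfolding S_def by blast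
      have "norm (t *\<^sub>R x + (t * s) *\<^sub>R c) - (t * s)*\<delta> \<in> S (t *\<^sub>R x)" using Sin 1 t by simp
      then have "p (t *\<^sub>R x) \<le> norm (t *\<^sub>R x + (t * s) *\<^sub>R c) - (t * s)*\<delta>" by (rule plow)
      also have "norm (t *\<^sub>R x + (t * s) *\<^sub>R c) - (t * s)*\<delta> = t * u"
      proof -
        have e: "t *\<^sub>R x + (t * s) *\<^sub>R c = t *\<^sub>R (x + s *\<^sub>R c)" by (simp add: scaleR_add_right)
        have n: "norm (t *\<^sub>R x + (t * s) *\<^sub>R c) = t * norm (x + s *\<^sub>R c)" unfolding e using t by simp
        have "t * u = t * norm (x + s *\<^sub>R c) - t * (s * \<delta>)" by (simp add: 1(3) right_diff_distrib)
        then show ?thesis using n by (simp add: mult.assoc)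
      qed
      finally show ?thesis using t by (simp add: field_simps)
    qed
    then have "p (t *\<^sub>R x) / t \<le> p x" by (rule pgr)
    then show ?thesis using t by (simp add: field_simps)
  qed
  obtain f where lf: "linear f" and fp: "\<And>x. f x \<le> p x"
    using hahn_banach_sublinear[of p, OF subadd hom] by blast
  have fb: "\<bar>f x\<bar> \<le> norm x" for x
  proof -
    have "f x \<le> norm x" using fp[of x] pnorm[of x] by linarith
    moreover have "- f x \<le> norm x" using fp[of "-x"] pnorm[of "-x"] linear_neg[OF lf, of x] by simp
    ultimately show ?thesis by linarith
  qed
  have bl: "bounded_linear f"
    using lf fb by (intro bounded_linear_intro[where K=1]) (auto simp: linear_add linear_scale)
  define F where "F = Blinfun f"
  have Fa: "blinfun_apply F = f" unfolding F_def using bl by (simp add: bounded_linear_Blinfun_apply)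
  have "norm F \<le> 1" by (rule norm_blinfun_bound) (use fb Fa in auto)
  moreover have "\<delta> \<le> blinfun_apply F c" if "c\<in>C" for c
    using fp[of "-c"] pc[OF that] linear_neg[OF lf, of c] Fa by simp
  ultimately show ?thesis by blast
qed

lemma norming:
  fixes x :: "'a::real_normed_vector"
  shows "\<exists>f::'a \<Rightarrow>\<^sub>L real. norm f \<le> 1 \<and> blinfun_apply f x = norm x"
proof (cases "x = 0")
  case True then show ?thesis by (intro exI[of _ 0]) simp
next
  case False
  obtain f::"'a \<Rightarrow>\<^sub>L real" where f: "norm f \<le> 1" "norm x \<le> blinfun_apply f x"
    using separation[of "{x}" "norm x"] False by auto
  have "blinfun_apply f x \<le> norm f * norm x" using norm_blinfun[of f x] by simp
  also have "\<dots> \<le> norm x" using f(1) by (simp add: mult_left_le_one_le)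
  finally show ?thesis using f by (intro exI[of _ f]) auto
qed

lemma finite_in_image_bounded:
  assumes "finite S" "S \<subseteq> x ` D"
  shows "\<exists>N::nat. S \<subseteq> x ` (D \<inter> {..N})"
  using assms
proof (induction S rule: finite_induct)
  case empty then show ?case by simp
next
  case (insert s S)
  then obtain N where N: "S \<subseteq> x ` (D \<inter> {..N})" by blast
  obtain i where i: "i \<in> D" "s = x i" using insert by blast
  have "insert s S \<subseteq> x ` (D \<inter> {..max N i})" using N i by auto
  then show ?case by blast
qed

lemma cvx_comb_ge:
  fixes a b u v \<eta> :: real
  assumes "\<eta> \<le> a" "\<eta> \<le> b" "0 \<le> u" "0 \<le> v" "u + v = 1"
  shows "\<eta> \<le> u * a + v * b"
proof -
  have "u * \<eta> + v * \<eta> \<le> u * a + v * b" using assms by (intro add_mono mult_left_mono) auto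
  moreover have "u * \<eta> + v * \<eta> = \<eta>" using assms(5) by (metis distrib_right mult_1)
  ultimately show ?thesis by simp
qed

lemma mazur_contra:
  fixes x :: "nat \<Rightarrow> 'a::real_normed_vector"
  assumes wn: "weakly_converges x 0" and inf: "infinite D" and eta: "\<eta> > 0"
    and H: "\<And>N. \<exists>f::'a \<Rightarrow>\<^sub>L real. norm f \<le> 1 \<and> (\<forall>i\<in>D. i \<le> N \<longrightarrow> \<eta> < blinfun_apply f (x i))"
  shows False
proof (cases "\<exists>c \<in> convex hull (x ` D). norm c < \<eta>")
  case True
  then obtain c where c: "c \<in> convex hull (x ` D)" "norm c < \<eta>" by blast
  then obtain S u where Su: "finite S" "S \<subseteq> x ` D" "\<forall>v\<in>S. 0 \<le> u v" "sum u S = 1" "(\<Sum>v\<in>S. u v *\<^sub>R v) = c"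
    unfolding convex_hull_explicit by blast
  have cS: "c \<in> convex hull S" using Su by (auto simp: convex_hull_finite)
  obtain N where N: "S \<subseteq> x ` (D \<inter> {..N})" using finite_in_image_bounded[OF Su(1,2)] by blast
  obtain f::"'a \<Rightarrow>\<^sub>L real" where f: "norm f \<le> 1" "\<forall>i\<in>D. i \<le> N \<longrightarrow> \<eta> < blinfun_apply f (x i)"
    using H by blast
  have cvx: "convex {y. \<eta> \<le> blinfun_apply f y}"
    by (rule convexI) (auto simp: blinfun.add_right blinfun.scaleR_right intro: cvx_comb_ge)
  have "S \<subseteq> {y. \<eta> \<le> blinfun_apply f y}" using N f by force
  then have "convex hull S \<subseteq> {y. \<eta> \<le> blinfun_apply f y}" by (rule hull_minimal) (rule cvx)
  then have "\<eta> \<le> blinfun_apply f c" using cS by blast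
  also have "\<dots> \<le> norm f * norm c" using norm_blinfun[of f c] by simp
  also have "\<dots> \<le> norm c" using f(1) by (simp add: mult_left_le_one_le)
  finally show False using c by simp
next
  case False
  have ne: "convex hull (x ` D) \<noteq> {}" using inf by auto
  obtain f::"'a \<Rightarrow>\<^sub>L real" where f: "\<forall>c\<in>convex hull (x ` D). \<eta> \<le> blinfun_apply f c"
    using separation[OF convex_convex_hull ne eta] False by force
  have "(\<lambda>k. blinfun_apply f (x k)) \<longlonglongrightarrow> 0" using wn unfolding weakly_converges_def by force
  then obtain N where N: "\<And>k. k \<ge> N \<Longrightarrow> \<bar>blinfun_apply f (x k)\<bar> < \<eta>"
    using eta by (auto simp: lim_sequentially dist_real_def)
  obtain k where "k \<in> D" "k \<ge> N" using inf by (meson infinite_nat_iff_unbounded_le)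
  then show False using N[of k] f hull_subset[of "x ` D" convex] by force
qed

lemma weakly_null_bounded:
  fixes x :: "nat \<Rightarrow> 'a::banach"
  assumes wn: "weakly_converges x 0"
  shows "bounded (range x)"
proof -
  define T where "T n = {f::'a \<Rightarrow>\<^sub>L real. \<forall>k. \<bar>blinfun_apply f (x k)\<bar> \<le> real n}" for n
  have clT: "closed (T n)" for n
  proof -
    have "T n = (\<Inter>k. {f. \<bar>blinfun_apply f (x k)\<bar> \<le> real n})" unfolding T_def by auto
    moreover have "closed {f::'a \<Rightarrow>\<^sub>L real. \<bar>blinfun_apply f (x k)\<bar> \<le> real n}" for k
    proof -
      have "continuous_on UNIV (\<lambda>f::'a \<Rightarrow>\<^sub>L real. blinfun_apply f (x k))"
        by (rule linear_continuous_on) (rule blinfun.bounded_linear_left)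
      then have "continuous_on UNIV (\<lambda>f::'a \<Rightarrow>\<^sub>L real. \<bar>blinfun_apply f (x k)\<bar>)"
        by (intro continuous_intros)
      then show ?thesis by (intro closed_Collect_le) (auto simp: continuous_on_const)
    qed
    ultimately show ?thesis by auto
  qed
  have cover: "(\<Union>n. T n) = UNIV"
  proof -
    have "f \<in> (\<Union>n. T n)" for f
    proof -
      have "(\<lambda>k. blinfun_apply f (x k)) \<longlonglongrightarrow> 0" using wn unfolding weakly_converges_def by force
      then have "bounded (range (\<lambda>k. blinfun_apply f (x k)))"
        using convergent_imp_bounded by blast
      then obtain B where B: "\<And>k. \<bar>blinfun_apply f (x k)\<bar> \<le> B" unfolding bounded_iff by auto
      have "\<bar>blinfun_apply f (x k)\<bar> \<le> real (nat \<lceil>B\<rceil>)" for k using B[of k] by linarith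
      then show ?thesis unfolding T_def by blast
    qed
    then show ?thesis by blast
  qed
  have "\<exists>n. interior (T n) \<noteq> {}"
  proof (rule ccontr)
    assume "\<not> ?thesis"
    then have "euclidean interior_of \<Union>(range T) = {}"
      by (intro Baire_category_alt) (auto simp: completely_metrizable_space_euclidean euclidean_interior_of clT)
    then show False using cover by (simp add: euclidean_interior_of)
  qed
  then obtain n g where "g \<in> interior (T n)" by blast
  then obtain r where r: "r > 0" "ball g r \<subseteq> T n" by (meson open_contains_ball open_interior interior_subset subset_trans)
  have "norm (x k) \<le> 4 * real n / r" for k
  proof -
    obtain h::"'a \<Rightarrow>\<^sub>L real" where h: "norm h \<le> 1" "blinfun_apply h (x k) = norm (x k)" using norming by blast
    have "g + (r/2) *\<^sub>R h \<in> ball g r" using r h by (simp add: dist_norm)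
    then have "\<bar>blinfun_apply (g + (r/2) *\<^sub>R h) (x k)\<bar> \<le> real n" using r T_def by blast
    then have 1: "\<bar>blinfun_apply g (x k) + (r/2) * norm (x k)\<bar> \<le> real n" using h by (simp add: blinfun.add_left blinfun.scaleR_left)
    have "g \<in> T n" using r by auto
    then have 2: "\<bar>blinfun_apply g (x k)\<bar> \<le> real n" unfolding T_def by blast
    from 1 2 have "(r/2) * norm (x k) \<le> 2 * real n" by linarith
    then show ?thesis using r by (simp add: field_simps)
  qed
  then show ?thesis unfolding bounded_iff by blast
qed

lemma diag:
  fixes Q :: "nat \<Rightarrow> nat set \<Rightarrow> bool"
  assumes hered: "\<And>a M M'. Q a M \<Longrightarrow> M' \<subseteq> M \<Longrightarrow> Q a M'"
   and H: "\<And>M'. M' \<subseteq> M0 \<Longrightarrow> infinite M' \<Longrightarrow> \<exists>a\<in>M'. \<exists>M''. M'' \<subseteq> M' \<and> infinite M'' \<and> (\<forall>y\<in>M''. a < y) \<and> Q a M''"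
   and inf: "infinite M0"
  shows "\<exists>D \<subseteq> M0. infinite D \<and> (\<forall>a\<in>D. Q a {y\<in>D. a < y})"
proof -
  define P where "P n s \<longleftrightarrow> fst s \<in> M0 \<and> snd s \<subseteq> M0 \<and> infinite (snd s) \<and> (\<forall>y\<in>snd s. fst s < y) \<and> Q (fst s) (snd s)"
    for n::nat and s :: "nat \<times> nat set"
  have "\<exists>s. \<forall>n. P n (s n) \<and> (fst (s (Suc n)) \<in> snd (s n) \<and> snd (s (Suc n)) \<subseteq> snd (s n))"
  proof (rule dependent_nat_choice)
    obtain a M'' where "a\<in>M0" "M'' \<subseteq> M0" "infinite M''" "\<forall>y\<in>M''. a < y" "Q a M''"
      using H[OF order_refl inf] by blast
    then show "\<exists>s. P 0 s" unfolding P_def by (intro exI[of _ "(a, M'')"]) auto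
  next
    fix s n assume Ps: "P n s"
    then have "snd s \<subseteq> M0" "infinite (snd s)" unfolding P_def by auto
    then obtain a M'' where "a \<in> snd s" "M'' \<subseteq> snd s" "infinite M''" "\<forall>y\<in>M''. a<y" "Q a M''"
      using H[of "snd s"] by blast
    then show "\<exists>t. P (Suc n) t \<and> fst t \<in> snd s \<and> snd t \<subseteq> snd s"
      using Ps unfolding P_def by (intro exI[of _ "(a, M'')"]) auto
  qed
  then obtain s where s: "\<And>n. P n (s n)" "\<And>n. fst (s (Suc n)) \<in> snd (s n)" "\<And>n. snd (s (Suc n)) \<subseteq> snd (s n)"
    by blast
  define a where "a n = fst (s n)" for n
  define M where "M n = snd (s n)" for n
  have PM: "a n \<in> M0" "M n \<subseteq> M0" "\<forall>y\<in>M n. a n < y" "Q (a n) (M n)" for n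
    using s(1)[of n] unfolding P_def a_def M_def by auto
  have Mdec: "M n \<subseteq> M m" if "m \<le> n" for m n
    using that
  proof (induction n rule: dec_induct)
    case base then show ?case by simp
  next
    case (step k) then show ?case using s(3)[of k] M_def by auto
  qed
  have aM: "a n \<in> M m" if mn: "m < n" for m n
  proof -
    obtain k where k: "n = Suc k" "m \<le> k" using mn by (cases n) auto
    have "a n \<in> M k" using s(2)[of k] k a_def M_def by simp
    then show ?thesis using Mdec[OF k(2)] by blast
  qed
  have sm: "strict_mono a"
    by (rule strict_monoI_Suc) (use aM PM in blast)
  define D where "D = range a"
  have "infinite D" unfolding D_def using strict_mono_imp_inj_on[OF sm] range_inj_infinite by blast
  moreover have "D \<subseteq> M0" unfolding D_def using PM by blast
  moreover have "Q d {y\<in>D. d < y}" if dD: "d \<in> D" for d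
  proof -
    obtain n where n: "d = a n" using dD D_def by blast
    have "{y\<in>D. d < y} \<subseteq> M n"
    proof
      fix y assume "y \<in> {y\<in>D. d < y}"
      then obtain m where "y = a m" "a n < a m" using D_def n by blast
      then show "y \<in> M n" using aM[of n m] strict_mono_less[OF sm] by blast
    qed
    then show ?thesis using hered PM(4) n by blast
  qed
  ultimately show ?thesis by blast
qed

lemma infinite_tail: "infinite (M::nat set) \<Longrightarrow> infinite {y\<in>M. a < y}"
proof -
  assume "infinite M"
  moreover have "M \<subseteq> {y\<in>M. a < y} \<union> {..a}" by auto
  ultimately show ?thesis using finite_subset by blast
qed

locale lm =
  fixes x :: "nat \<Rightarrow> 'a::real_normed_vector" and b \<eta> :: real
  assumes wn: "weakly_converges x 0" and eta: "\<eta> > 0"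
    and rich: "\<And>M n. infinite M \<Longrightarrow> \<exists>f::'a \<Rightarrow>\<^sub>L real. norm f \<le> 1 \<and>
                   (\<exists>K\<subseteq>M. finite K \<and> card K = n \<and> (\<forall>i\<in>K. b \<le> blinfun_apply f (x i)))"

context lm
begin

definition R :: "nat \<Rightarrow> nat set \<Rightarrow> nat set \<Rightarrow> nat set \<Rightarrow> bool" where
  "R n B S M \<longleftrightarrow> (\<forall>M'. M' \<subseteq> M \<longrightarrow> infinite M' \<longrightarrow> (\<exists>f::'a \<Rightarrow>\<^sub>L real. norm f \<le> 1 \<and>
      (\<forall>i\<in>B. b \<le> blinfun_apply f (x i)) \<and> (\<forall>i\<in>S. blinfun_apply f (x i) \<le> \<eta>) \<and>
      (\<exists>K\<subseteq>M'. finite K \<and> card K = n \<and> (\<forall>i\<in>K. b \<le> blinfun_apply f (x i)))))"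

lemma R_D:
  assumes "R n B S M" "M' \<subseteq> M" "infinite M'"
  obtains f K where "norm f \<le> 1" "\<forall>i\<in>B. b \<le> blinfun_apply f (x i)" "\<forall>i\<in>S. blinfun_apply f (x i) \<le> \<eta>"
     "K \<subseteq> M'" "finite K" "card K = n" "\<forall>i\<in>K. b \<le> blinfun_apply f (x i)"
  using assms unfolding R_def by blast

lemma R_hered: assumes "R n B S M" "M' \<subseteq> M" shows "R n B S M'"
  unfolding R_def
proof (intro allI impI)
  fix M'' assume h: "M'' \<subseteq> M'" "infinite M''"
  have "M'' \<subseteq> M" using h(1) assms(2) by auto
  then show "\<exists>f::'a \<Rightarrow>\<^sub>L real. norm f \<le> 1 \<and>
      (\<forall>i\<in>B. b \<le> blinfun_apply f (x i)) \<and> (\<forall>i\<in>S. blinfun_apply f (x i) \<le> \<eta>) \<and>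
      (\<exists>K\<subseteq>M''. finite K \<and> card K = n \<and> (\<forall>i\<in>K. b \<le> blinfun_apply f (x i)))"
    by (rule assms(1)[unfolded R_def, rule_format, OF _ h(2)])
qed

lemma R_mono: assumes "R n B S M" "m \<le> n" shows "R m B S M"
  unfolding R_def
proof (intro allI impI)
  fix M' assume "M' \<subseteq> M" "infinite M'"
  then obtain f K where f: "norm f \<le> 1" "\<forall>i\<in>B. b \<le> blinfun_apply f (x i)" "\<forall>i\<in>S. blinfun_apply f (x i) \<le> \<eta>"
     "K \<subseteq> M'" "finite K" "card K = n" "\<forall>i\<in>K. b \<le> blinfun_apply f (x i)"
    using R_D[OF assms(1)] by blast
  obtain K' where "K' \<subseteq> K" "card K' = m" using obtain_subset_with_card_n[of m K] f(6) assms(2) by metis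
  moreover have "finite K'" using \<open>K' \<subseteq> K\<close> f(5) finite_subset by blast
  ultimately show "\<exists>f::'a \<Rightarrow>\<^sub>L real. norm f \<le> 1 \<and>
      (\<forall>i\<in>B. b \<le> blinfun_apply f (x i)) \<and> (\<forall>i\<in>S. blinfun_apply f (x i) \<le> \<eta>) \<and>
      (\<exists>K\<subseteq>M'. finite K \<and> card K = m \<and> (\<forall>i\<in>K. b \<le> blinfun_apply f (x i)))"
  proof (intro exI[of _ f] conjI)
    show "\<exists>K\<subseteq>M'. finite K \<and> card K = m \<and> (\<forall>i\<in>K. b \<le> blinfun_apply f (x i))"
      using \<open>K' \<subseteq> K\<close> \<open>card K' = m\<close> \<open>finite K'\<close> f(4,7) by blast
  qed (use f in auto)
qed

lemma R_base: "R n {} {} M"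
  unfolding R_def using rich by simp

lemma add_small:
  assumes RM: "R n B S M" and inf: "infinite M"
  shows "\<exists>a\<in>M. \<exists>M'. M' \<subseteq> M \<and> infinite M' \<and> (\<forall>y\<in>M'. a<y) \<and> R n B (insert a S) M'"
proof (rule ccontr)
  assume neg: "\<not> ?thesis"
  define Q where "Q a M'' \<longleftrightarrow> (\<forall>f::'a \<Rightarrow>\<^sub>L real. norm f \<le> 1 \<and> (\<forall>i\<in>B. b \<le> blinfun_apply f (x i))
      \<and> (\<forall>i\<in>insert a S. blinfun_apply f (x i) \<le> \<eta>) \<longrightarrow>
      \<not>(\<exists>K\<subseteq>M''. finite K \<and> card K = n \<and> (\<forall>i\<in>K. b \<le> blinfun_apply f (x i))))" for a M''
  have hered: "Q a M2" if "Q a M1" "M2 \<subseteq> M1" for a M1 M2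
  proof -
    have "\<And>K. K \<subseteq> M2 \<Longrightarrow> K \<subseteq> M1" using that(2) by blast
    then show ?thesis using that(1) unfolding Q_def by blast
  qed
  have H: "\<exists>a\<in>M'. \<exists>M''. M'' \<subseteq> M' \<and> infinite M'' \<and> (\<forall>y\<in>M''. a < y) \<and> Q a M''"
    if M': "M' \<subseteq> M" "infinite M'" for M'
  proof -
    obtain a where a: "a \<in> M'" using M'(2) by (metis finite.emptyI ex_in_conv)
    let ?T = "{y\<in>M'. a<y}"
    have Tinf: "infinite ?T" using infinite_tail[OF M'(2)] .
    have "\<not> R n B (insert a S) ?T"
    proof
      assume RT: "R n B (insert a S) ?T"
      have "a \<in> M" using a M'(1) by blast
      moreover have "?T \<subseteq> M" "\<forall>y\<in>?T. a<y" using M'(1) by auto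
      ultimately have "\<exists>a\<in>M. \<exists>M'. M' \<subseteq> M \<and> infinite M' \<and> (\<forall>y\<in>M'. a<y) \<and> R n B (insert a S) M'"
        using RT Tinf by blast
      then show False using neg by blast
    qed
    then obtain M'' where M'': "M'' \<subseteq> ?T" "infinite M''"
      "\<not>(\<exists>f::'a \<Rightarrow>\<^sub>L real. norm f \<le> 1 \<and>
      (\<forall>i\<in>B. b \<le> blinfun_apply f (x i)) \<and> (\<forall>i\<in>insert a S. blinfun_apply f (x i) \<le> \<eta>) \<and>
      (\<exists>K\<subseteq>M''. finite K \<and> card K = n \<and> (\<forall>i\<in>K. b \<le> blinfun_apply f (x i))))"
      unfolding R_def by blast
    have "Q a M''" unfolding Q_def using M''(3) by blast
    moreover have "M'' \<subseteq> M'" "\<forall>y\<in>M''. a < y" using M''(1) by auto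
    ultimately show ?thesis using a M''(2) by blast
  qed
  have "\<exists>D \<subseteq> M. infinite D \<and> (\<forall>a\<in>D. Q a {y\<in>D. a < y})"
    by (rule diag[of Q M, OF hered H inf])
  then obtain D where D: "D \<subseteq> M" "infinite D" "\<forall>a\<in>D. Q a {y\<in>D. a < y}"
    by blast
  have "\<exists>f::'a \<Rightarrow>\<^sub>L real. norm f \<le> 1 \<and> (\<forall>i\<in>D. i \<le> N \<longrightarrow> \<eta> < blinfun_apply f (x i))" for N
  proof -
    let ?T = "{y\<in>D. N<y}"
    have "infinite ?T" "?T \<subseteq> M" using infinite_tail[OF D(2)] D(1) by auto
    then obtain f K where f: "norm f \<le> 1" "\<forall>i\<in>B. b \<le> blinfun_apply f (x i)" "\<forall>i\<in>S. blinfun_apply f (x i) \<le> \<eta>"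
     "K \<subseteq> ?T" "finite K" "card K = n" "\<forall>i\<in>K. b \<le> blinfun_apply f (x i)"
      using R_D[OF RM] by blast
    have "\<eta> < blinfun_apply f (x i)" if i: "i \<in> D" "i \<le> N" for i
    proof (rule ccontr)
      assume "\<not> \<eta> < blinfun_apply f (x i)"
      then have "\<forall>j\<in>insert i S. blinfun_apply f (x j) \<le> \<eta>" using f(3) by auto
      moreover have "K \<subseteq> {y\<in>D. i < y}" using f(4) i by auto
      ultimately show False using bspec[OF D(3) i(1)] f unfolding Q_def by blast
    qed
    then show ?thesis using f(1) by blast
  qed
  then show False using mazur_contra[OF wn D(2) eta] by blast
qed

lemma add_big:
  assumes RM: "R (Suc n) B S M" and inf: "infinite M"
  shows "\<exists>a\<in>M. \<exists>M'. M' \<subseteq> M \<and> infinite M' \<and> (\<forall>y\<in>M'. a<y) \<and> R n (insert a B) S M'"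
proof (rule ccontr)
  assume neg: "\<not> ?thesis"
  define Q where "Q a M'' \<longleftrightarrow> (\<forall>f::'a \<Rightarrow>\<^sub>L real. norm f \<le> 1 \<and> (\<forall>i\<in>insert a B. b \<le> blinfun_apply f (x i))
      \<and> (\<forall>i\<in>S. blinfun_apply f (x i) \<le> \<eta>) \<longrightarrow>
      \<not>(\<exists>K\<subseteq>M''. finite K \<and> card K = n \<and> (\<forall>i\<in>K. b \<le> blinfun_apply f (x i))))" for a M''
  have hered: "Q a M2" if "Q a M1" "M2 \<subseteq> M1" for a M1 M2
  proof -
    have "\<And>K. K \<subseteq> M2 \<Longrightarrow> K \<subseteq> M1" using that(2) by blast
    then show ?thesis using that(1) unfolding Q_def by blast
  qed
  have H: "\<exists>a\<in>M'. \<exists>M''. M'' \<subseteq> M' \<and> infinite M'' \<and> (\<forall>y\<in>M''. a < y) \<and> Q a M''"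
    if M': "M' \<subseteq> M" "infinite M'" for M'
  proof -
    obtain a where a: "a \<in> M'" using M'(2) by (metis finite.emptyI ex_in_conv)
    let ?T = "{y\<in>M'. a<y}"
    have Tinf: "infinite ?T" using infinite_tail[OF M'(2)] .
    have "\<not> R n (insert a B) S ?T"
    proof
      assume RT: "R n (insert a B) S ?T"
      have "a \<in> M" using a M'(1) by blast
      moreover have "?T \<subseteq> M" "\<forall>y\<in>?T. a<y" using M'(1) by auto
      ultimately have "\<exists>a\<in>M. \<exists>M'. M' \<subseteq> M \<and> infinite M' \<and> (\<forall>y\<in>M'. a<y) \<and> R n (insert a B) S M'"
        using RT Tinf by blast
      then show False using neg by blast
    qed
    then obtain M'' where M'': "M'' \<subseteq> ?T" "infinite M''"
      "\<not>(\<exists>f::'a \<Rightarrow>\<^sub>L real. norm f \<le> 1 \<and>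
      (\<forall>i\<in>insert a B. b \<le> blinfun_apply f (x i)) \<and> (\<forall>i\<in>S. blinfun_apply f (x i) \<le> \<eta>) \<and>
      (\<exists>K\<subseteq>M''. finite K \<and> card K = n \<and> (\<forall>i\<in>K. b \<le> blinfun_apply f (x i))))"
      unfolding R_def by blast
    have "Q a M''" unfolding Q_def using M''(3) by blast
    moreover have "M'' \<subseteq> M'" "\<forall>y\<in>M''. a < y" using M''(1) by auto
    ultimately show ?thesis using a M''(2) by blast
  qed
  have "\<exists>D \<subseteq> M. infinite D \<and> (\<forall>a\<in>D. Q a {y\<in>D. a < y})"
    by (rule diag[of Q M, OF hered H inf])
  then obtain D where D: "D \<subseteq> M" "infinite D" "\<forall>a\<in>D. Q a {y\<in>D. a < y}"
    by blast
  obtain f K where f: "norm f \<le> 1" "\<forall>i\<in>B. b \<le> blinfun_apply f (x i)" "\<forall>i\<in>S. blinfun_apply f (x i) \<le> \<eta>"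
     "K \<subseteq> D" "finite K" "card K = Suc n" "\<forall>i\<in>K. b \<le> blinfun_apply f (x i)"
    using R_D[OF RM D(1,2)] by blast
  have Kne: "K \<noteq> {}" using f(6) by auto
  define a where "a = Min K"
  have aK: "a \<in> K" using Kne f(5) a_def by simp
  have "K - {a} \<subseteq> {y\<in>D. a < y}" using f(4,5) a_def by (auto simp: order.not_eq_order_implies_strict)
  moreover have "card (K - {a}) = n" using f(5,6) aK by simp
  moreover have "finite (K - {a})" using f(5) by simp
  moreover have big: "\<forall>i\<in>insert a B. b \<le> blinfun_apply f (x i)" using f(2,7) aK by blast
  moreover have Qa: "Q a {y\<in>D. a<y}" using D(3) aK f(4) by blast
  have nK: "\<not>(\<exists>K\<subseteq>{y\<in>D. a<y}. finite K \<and> card K = n \<and> (\<forall>i\<in>K. b \<le> blinfun_apply f (x i)))"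
    by (rule Qa[unfolded Q_def, THEN spec[of _ f], THEN mp]) (use f(1,3) big in blast)
  moreover have "\<forall>i\<in>K - {a}. b \<le> blinfun_apply f (x i)" using f(7) by blast
  ultimately show False by blast
qed

lemma strong_small:
  assumes "R n B S M" "infinite M"
  shows "\<exists>D\<subseteq>M. infinite D \<and> (\<forall>a\<in>D. R n B (insert a S) {y\<in>D. a<y})"
proof (rule diag[where Q = "\<lambda>a M. R n B (insert a S) M"])
  show "\<And>a M M'. R n B (insert a S) M \<Longrightarrow> M' \<subseteq> M \<Longrightarrow> R n B (insert a S) M'" by (rule R_hered)
  show "\<And>M'. M' \<subseteq> M \<Longrightarrow> infinite M' \<Longrightarrow> \<exists>a\<in>M'. \<exists>M''. M'' \<subseteq> M' \<and> infinite M'' \<and> (\<forall>y\<in>M''. a < y) \<and> R n B (insert a S) M''"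
    using add_small R_hered[OF assms(1)] by blast
qed (rule assms(2))

lemma strong_big:
  assumes "R (Suc n) B S M" "infinite M"
  shows "\<exists>D\<subseteq>M. infinite D \<and> (\<forall>a\<in>D. R n (insert a B) S {y\<in>D. a<y})"
proof (rule diag[where Q = "\<lambda>a M. R n (insert a B) S M"])
  show "\<And>a M M'. R n (insert a B) S M \<Longrightarrow> M' \<subseteq> M \<Longrightarrow> R n (insert a B) S M'" by (rule R_hered)
  show "\<And>M'. M' \<subseteq> M \<Longrightarrow> infinite M' \<Longrightarrow> \<exists>a\<in>M'. \<exists>M''. M'' \<subseteq> M' \<and> infinite M'' \<and> (\<forall>y\<in>M''. a < y) \<and> R n (insert a B) S M''"
    using add_big R_hered[OF assms(1)] by blast
qed (rule assms(2))

lemma multi: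
  assumes "finite CS"
  shows "(\<forall>(n,B,S)\<in>CS. R (Suc n) B S M) \<Longrightarrow> infinite M \<Longrightarrow> \<exists>D\<subseteq>M. infinite D \<and>
     (\<forall>a\<in>D. \<forall>(n,B,S)\<in>CS. R n (insert a B) S {y\<in>D. a<y} \<and> R n B (insert a S) {y\<in>D. a<y})"
  using assms
proof (induction CS arbitrary: M rule: finite_induct)
  case empty then show ?case by blast
next
  case (insert c CS)
  obtain n B S where c: "c = (n,B,S)" by (cases c)
  have "\<forall>(n,B,S)\<in>CS. R (Suc n) B S M" using insert.prems(1) by auto
  then obtain D1 where D1: "D1 \<subseteq> M" "infinite D1"
     "\<forall>a\<in>D1. \<forall>(n,B,S)\<in>CS. R n (insert a B) S {y\<in>D1. a<y} \<and> R n B (insert a S) {y\<in>D1. a<y}"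
    using insert.IH insert.prems(2) by blast
  have "R (Suc n) B S D1" using insert.prems(1) c D1(1) R_hered by auto
  then obtain D2 where D2: "D2 \<subseteq> D1" "infinite D2" "\<forall>a\<in>D2. R n (insert a B) S {y\<in>D2. a<y}"
    using strong_big[OF \<open>R (Suc n) B S D1\<close> D1(2)] by blast
  have "R n B S D2" using \<open>R (Suc n) B S D1\<close> D2(1) R_hered R_mono by (meson le_SucI order_refl)
  then obtain D3 where D3: "D3 \<subseteq> D2" "infinite D3" "\<forall>a\<in>D3. R n B (insert a S) {y\<in>D3. a<y}"
    using strong_small[OF \<open>R n B S D2\<close> D2(2)] by blast
  have sub: "{y\<in>D3. a<y} \<subseteq> {y\<in>D2. a<y}" "{y\<in>D3. a<y} \<subseteq> {y\<in>D1. a<y}" for a using D3(1) D2(1) by auto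
  have "\<forall>a\<in>D3. \<forall>(n,B,S)\<in>insert c CS. R n (insert a B) S {y\<in>D3. a<y} \<and> R n B (insert a S) {y\<in>D3. a<y}"
  proof (intro ballI)
    fix a t assume a: "a \<in> D3" and t: "t \<in> insert c CS"
    obtain n' B' S' where t': "t = (n',B',S')" by (cases t)
    show "case t of (n,B,S) \<Rightarrow> R n (insert a B) S {y\<in>D3. a<y} \<and> R n B (insert a S) {y\<in>D3. a<y}"
    proof (cases "t = c")
      case True
      have "a \<in> D2" using a D3(1) by blast
      then have "R n (insert a B) S {y\<in>D2. a<y}" using D2(3) by blast
      then have 1: "R n (insert a B) S {y\<in>D3. a<y}" using R_hered sub(1) by blast
      have 2: "R n B (insert a S) {y\<in>D3. a<y}" using D3(3) a by blast
      show ?thesis using 1 2 True c by simp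
    next
      case False
      then have "t \<in> CS" using t by auto
      have "a \<in> D1" using a D3(1) D2(1) by blast
      then have "R n' (insert a B') S' {y\<in>D1. a<y} \<and> R n' B' (insert a S') {y\<in>D1. a<y}"
        using D1(3) \<open>t \<in> CS\<close> t' by fastforce
      then show ?thesis using R_hered[OF _ sub(2)[of a]] t' by auto
    qed
  qed
  then show ?case using D3(1,2) D2(1) D1(1) by blast
qed

end

context lm
begin

definition pos :: "nat set \<Rightarrow> nat \<Rightarrow> nat" where "pos A m = card {y\<in>A. y < m}"

definition Inv :: "nat set \<Rightarrow> nat set \<Rightarrow> bool" where
  "Inv A M \<longleftrightarrow> (\<forall>G T. G \<subseteq> A \<longrightarrow> T \<subseteq> A \<longrightarrow> G \<inter> T = {} \<longrightarrow> G \<union> T \<noteq> {} \<longrightarrow>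
     card (G \<union> T) \<le> pos A (Min (G \<union> T)) + 1 \<longrightarrow> R (pos A (Min (G \<union> T)) + 1 - card (G \<union> T)) G T M)"

lemma pos_insert: "\<not> a < m \<Longrightarrow> pos (insert a A) m = pos A m"
  unfolding pos_def by (metis (mono_tags, lifting) insert_iff mem_Collect_eq)

lemma step:
  assumes A: "finite A" and M: "infinite M" and bey: "\<forall>y\<in>M. \<forall>z\<in>A. z < y" and I: "Inv A M"
  shows "\<exists>a M'. a \<in> M \<and> M' \<subseteq> M \<and> infinite M' \<and> (\<forall>y\<in>M'. a < y) \<and> Inv (insert a A) M'"
proof -
  define P where "P = {(G,T). G \<subseteq> A \<and> T \<subseteq> A \<and> G \<inter> T = {} \<and> G \<union> T \<noteq> {} \<and> card (G \<union> T) \<le> pos A (Min (G \<union> T))}"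
  define CS where "CS = insert (card A, {}, {}) ((\<lambda>(G,T). (pos A (Min (G \<union> T)) - card (G \<union> T), G, T)) ` P)"
  have "P \<subseteq> Pow A \<times> Pow A" unfolding P_def by auto
  then have "finite P" using A finite_subset by blast
  then have finCS: "finite CS" unfolding CS_def by simp
  have RCS: "\<forall>(n,B,S)\<in>CS. R (Suc n) B S M"
  proof
    fix c assume "c \<in> CS"
    then consider "c = (card A, {}, {})" | G T where "(G,T) \<in> P" "c = (pos A (Min (G \<union> T)) - card (G \<union> T), G, T)"
      unfolding CS_def by auto
    then show "case c of (n,B,S) \<Rightarrow> R (Suc n) B S M"
    proof cases
      case 1 then show ?thesis using R_base by simp
    next
      case (2 G T)
      then have h: "G \<subseteq> A" "T \<subseteq> A" "G \<inter> T = {}" "G \<union> T \<noteq> {}" "card (G \<union> T) \<le> pos A (Min (G \<union> T))"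
        unfolding P_def by auto
      then have "R (pos A (Min (G \<union> T)) + 1 - card (G \<union> T)) G T M" using I unfolding Inv_def by simp
      moreover have "pos A (Min (G \<union> T)) + 1 - card (G \<union> T) = Suc (pos A (Min (G \<union> T)) - card (G \<union> T))"
        using h(5) by simp
      ultimately show ?thesis using 2 by simp
    qed
  qed
  obtain D where D: "D \<subseteq> M" "infinite D"
    "\<forall>a\<in>D. \<forall>(n,B,S)\<in>CS. R n (insert a B) S {y\<in>D. a<y} \<and> R n B (insert a S) {y\<in>D. a<y}"
    using multi[OF finCS RCS M] by blast
  obtain a where aD: "a \<in> D" using D(2) by (metis finite.emptyI ex_in_conv)
  define M' where "M' = {y\<in>D. a<y}"
  have aM: "a \<in> M" using aD D(1) by blast
  have Aa: "\<forall>z\<in>A. z < a" using bey aM by blast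
  then have aA: "a \<notin> A" by blast
  have Dat: "\<forall>(n,B,S)\<in>CS. R n (insert a B) S M' \<and> R n B (insert a S) M'" using D(3) aD M'_def by blast
  have "Inv (insert a A) M'" unfolding Inv_def
  proof (intro allI impI)
    fix G T assume GA: "G \<subseteq> insert a A" and TA: "T \<subseteq> insert a A" and dj: "G \<inter> T = {}" and ne: "G \<union> T \<noteq> {}"
      and cd: "card (G \<union> T) \<le> pos (insert a A) (Min (G \<union> T)) + 1"
    have finGT: "finite (G \<union> T)" using GA TA A finite_subset by blast
    show "R (pos (insert a A) (Min (G \<union> T)) + 1 - card (G \<union> T)) G T M'"
    proof (cases "a \<in> G \<union> T")
      case False
      then have G: "G \<subseteq> A" "T \<subseteq> A" using GA TA by auto
      have "Min (G \<union> T) \<in> A" using Min_in[OF finGT ne] G by blast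
      then have pe: "pos (insert a A) (Min (G \<union> T)) = pos A (Min (G \<union> T))"
        using Aa by (intro pos_insert) auto
      have "R (pos A (Min (G \<union> T)) + 1 - card (G \<union> T)) G T M"
        using I G dj ne cd pe unfolding Inv_def by simp
      then show ?thesis using pe R_hered[of _ G T M M'] D(1) M'_def by auto
    next
      case True
      show ?thesis
      proof (cases "G \<union> T = {a}")
        case True
        have "pos (insert a A) a = card A"
        proof -
          have "{y\<in>insert a A. y < a} = A" using Aa by auto
          then show ?thesis unfolding pos_def by simp
        qed
        then have eq: "pos (insert a A) (Min (G \<union> T)) + 1 - card (G \<union> T) = card A" using True by simp
        have "R (card A) {a} {} M' \<and> R (card A) {} {a} M'" using Dat unfolding CS_def by auto
        moreover have "(G = {a} \<and> T = {}) \<or> (G = {} \<and> T = {a})"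
        proof -
          have g: "G = {} \<or> G = {a}" "T = {} \<or> T = {a}"
            using subset_singleton_iff[of G a] subset_singleton_iff[of T a] True by auto
          show ?thesis using g dj True by auto
        qed
        ultimately show ?thesis using eq by auto
      next
        case False
        define G0 where "G0 = G - {a}"
        define T0 where "T0 = T - {a}"
        have U0: "G0 \<union> T0 = (G \<union> T) - {a}" unfolding G0_def T0_def by auto
        have U0ne: "G0 \<union> T0 \<noteq> {}" using U0 False \<open>a \<in> G \<union> T\<close> by blast
        have U0A: "G0 \<subseteq> A" "T0 \<subseteq> A" using GA TA G0_def T0_def by auto
        have finU0: "finite (G0 \<union> T0)" using U0A A finite_subset by blast
        have ins: "G \<union> T = insert a (G0 \<union> T0)" using U0 \<open>a \<in> G \<union> T\<close> by blast
        have aU0: "a \<notin> G0 \<union> T0" using U0 by blast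
        have cardU: "card (G \<union> T) = Suc (card (G0 \<union> T0))" using ins aU0 finU0 by simp
        have mU0: "Min (G0 \<union> T0) \<in> A" using Min_in[OF finU0 U0ne] U0A by blast
        have MinEq: "Min (G \<union> T) = Min (G0 \<union> T0)"
        proof -
          have "Min (insert a (G0 \<union> T0)) = min a (Min (G0 \<union> T0))" using finU0 U0ne by simp
          also have "\<dots> = Min (G0 \<union> T0)" using mU0 Aa by simp
          finally show ?thesis using ins by simp
        qed
        have pe: "pos (insert a A) (Min (G \<union> T)) = pos A (Min (G0 \<union> T0))"
          using MinEq mU0 Aa by (intro pos_insert[THEN trans]) auto
        define k where "k = pos A (Min (G0 \<union> T0)) - card (G0 \<union> T0)"
        have le: "card (G0 \<union> T0) \<le> pos A (Min (G0 \<union> T0))" using cd cardU pe by simp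
        have kk: "pos (insert a A) (Min (G \<union> T)) + 1 - card (G \<union> T) = k" using pe cardU le k_def by simp
        have dj0: "G0 \<inter> T0 = {}" using dj G0_def T0_def by auto
        have "(G0,T0) \<in> P" unfolding P_def using U0A dj0 U0ne le by auto
        then have "(k, G0, T0) \<in> CS" unfolding CS_def k_def by force
        then have RR: "R k (insert a G0) T0 M' \<and> R k G0 (insert a T0) M'" using Dat by auto
        show ?thesis
        proof (cases "a \<in> G")
          case True
          then have "G = insert a G0" "T = T0" using dj G0_def T0_def by auto
          then show ?thesis using RR kk by simp
        next
          case False
          then have "a \<in> T" using \<open>a \<in> G \<union> T\<close> by blast
          then have "T = insert a T0" "G = G0" using False G0_def T0_def by auto
          then show ?thesis using RR kk by simp
        qed
      qed
    qed
  qed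
  moreover have "M' \<subseteq> M" "infinite M'" "\<forall>y\<in>M'. a < y"
    using D(1,2) M'_def infinite_tail by auto
  ultimately show ?thesis using aM by blast
qed

lemma construct:
  "\<exists>r. strict_mono r \<and> (\<forall>F G. finite F \<and> F \<noteq> {} \<and> card F \<le> Min F + 1 \<and> G \<subseteq> F \<longrightarrow>
      (\<exists>f::'a \<Rightarrow>\<^sub>L real. norm f \<le> 1 \<and> (\<forall>i\<in>G. b \<le> blinfun_apply f (x (r i))) \<and>
         (\<forall>i\<in>F - G. blinfun_apply f (x (r i)) \<le> \<eta>)))"
proof -
  define P where "P n s \<longleftrightarrow> finite (fst s) \<and> card (fst s) = n \<and> infinite (snd s) \<and>
     (\<forall>y\<in>snd s. \<forall>z\<in>fst s. z<y) \<and> Inv (fst s) (snd s)" for n :: nat and s :: "nat set \<times> nat set"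
  define Q where "Q n s t \<longleftrightarrow> (\<exists>a\<in>snd s. fst t = insert a (fst s) \<and> snd t \<subseteq> snd s \<and> (\<forall>y\<in>snd t. a < y))"
    for n :: nat and s t :: "nat set \<times> nat set"
  have "\<exists>s. \<forall>n. P n (s n) \<and> Q n (s n) (s (Suc n))"
  proof (rule dependent_nat_choice)
    have "Inv {} UNIV" unfolding Inv_def by auto
    then show "\<exists>s. P 0 s" unfolding P_def by (intro exI[of _ "({}, UNIV)"]) auto
  next
    fix s n assume Ps: "P n s"
    then have h: "finite (fst s)" "card (fst s) = n" "infinite (snd s)" "\<forall>y\<in>snd s. \<forall>z\<in>fst s. z<y" "Inv (fst s) (snd s)"
      unfolding P_def by auto
    obtain a M' where aM: "a \<in> snd s" "M' \<subseteq> snd s" "infinite M'" "\<forall>y\<in>M'. a < y" "Inv (insert a (fst s)) M'"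
      using step[OF h(1,3,4,5)] by blast
    have "a \<notin> fst s" using h(4) aM(1) by blast
    then have "card (insert a (fst s)) = Suc n" using h(1,2) by simp
    moreover have "\<forall>y\<in>M'. \<forall>z\<in>insert a (fst s). z<y" using aM h(4) by fastforce
    ultimately have "P (Suc n) (insert a (fst s), M')" unfolding P_def using h(1) aM by simp
    moreover have "Q n s (insert a (fst s), M')" unfolding Q_def using aM by auto
    ultimately show "\<exists>t. P (Suc n) t \<and> Q n s t" by blast
  qed
  then obtain s where s: "\<And>n. P n (s n)" "\<And>n. Q n (s n) (s (Suc n))" by blast
  define A where "A n = fst (s n)" for n
  define M where "M n = snd (s n)" for n
  have "\<forall>n. \<exists>a. a \<in> M n \<and> A (Suc n) = insert a (A n) \<and> M (Suc n) \<subseteq> M n \<and> (\<forall>y\<in>M (Suc n). a < y)"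
    using s(2) unfolding Q_def A_def M_def by blast
  then obtain r where r: "\<And>n. r n \<in> M n" "\<And>n. A (Suc n) = insert (r n) (A n)" "\<And>n. M (Suc n) \<subseteq> M n"
      "\<And>n. \<forall>y\<in>M (Suc n). r n < y"
    by metis
  have PA: "finite (A n)" "card (A n) = n" "infinite (M n)" "Inv (A n) (M n)" for n
    using s(1)[of n] unfolding P_def A_def M_def by auto
  have Aeq: "A n = r ` {..<n}" for n
  proof (induction n)
    case 0 then show ?case using PA(1,2)[of 0] by simp
  next
    case (Suc n) then show ?case using r(2)[of n] by (simp add: lessThan_Suc)
  qed
  have sm: "strict_mono r"
    by (rule strict_monoI_Suc) (use r(1) r(4) in blast)
  have inj: "inj r" using strict_mono_imp_inj_on[OF sm] .
  have main: "\<exists>f::'a \<Rightarrow>\<^sub>L real. norm f \<le> 1 \<and> (\<forall>i\<in>G. b \<le> blinfun_apply f (x (r i))) \<and>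
         (\<forall>i\<in>F - G. blinfun_apply f (x (r i)) \<le> \<eta>)"
    if F: "finite F" "F \<noteq> {}" "card F \<le> Min F + 1" "G \<subseteq> F" for F G
  proof -
    define m where "m = Max F"
    have Fm: "F \<subseteq> {..<Suc m}" using F(1) m_def by (auto simp: less_Suc_eq_le)
    define A' where "A' = A (Suc m)"
    have A'eq: "A' = r ` {..<Suc m}" using Aeq A'_def by simp
    define G' where "G' = r ` G"
    define T' where "T' = r ` (F - G)"
    have G'A: "G' \<subseteq> A'" "T' \<subseteq> A'" using Fm F(4) A'eq G'_def T'_def by auto
    have dj: "G' \<inter> T' = {}" using inj G'_def T'_def by (auto simp: inj_def)
    have un: "G' \<union> T' = r ` F" using F(4) G'_def T'_def by auto
    have ne: "G' \<union> T' \<noteq> {}" using un F(2) by simp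
    have mn: "Min (r ` F) = r (Min F)" using mono_Min_commute[OF strict_mono_mono[OF sm] F(1,2)] by simp
    have MinF: "Min F \<in> F" using F(1,2) by simp
    have "{y \<in> A'. y < r (Min F)} = r ` {..<Min F}"
    proof
      show "{y \<in> A'. y < r (Min F)} \<subseteq> r ` {..<Min F}" using A'eq strict_mono_less[OF sm] by auto
      show "r ` {..<Min F} \<subseteq> {y \<in> A'. y < r (Min F)}"
        using A'eq strict_mono_less[OF sm] MinF Fm by fastforce
    qed
    then have pe: "pos A' (Min (G' \<union> T')) = Min F"
      unfolding pos_def un mn using card_image[OF inj_on_subset[OF inj subset_UNIV]] by simp
    have ce: "card (G' \<union> T') = card F" unfolding un using card_image[OF inj_on_subset[OF inj subset_UNIV]] by simp
    have "R (pos A' (Min (G' \<union> T')) + 1 - card (G' \<union> T')) G' T' (M (Suc m))"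
    proof -
      have I: "Inv A' (M (Suc m))" using PA(4) A'_def by simp
      have "card (G' \<union> T') \<le> pos A' (Min (G' \<union> T')) + 1" using F(3) pe ce by simp
      then show ?thesis using I[unfolded Inv_def, rule_format, OF G'A(1) G'A(2) dj ne] by blast
    qed
    then obtain f K where f: "norm f \<le> 1" "\<forall>i\<in>G'. b \<le> blinfun_apply f (x i)" "\<forall>i\<in>T'. blinfun_apply f (x i) \<le> \<eta>"
      "K \<subseteq> M (Suc m)" "finite K" "card K = pos A' (Min (G' \<union> T')) + 1 - card (G' \<union> T')"
      "\<forall>i\<in>K. b \<le> blinfun_apply f (x i)"
      by (rule R_D[OF _ order_refl PA(3)])
    show ?thesis using f G'_def T'_def by (intro exI[of _ f]) auto
  qed
  show ?thesis using sm main by blast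
qed

end

lemma richA:
  fixes x :: "nat \<Rightarrow> 'a::real_normed_vector"
  assumes wn: "weakly_converges x 0" and b0: "b > 0" and wb: "ereal b < wu_tilde x 0" and M: "infinite M"
  shows "\<exists>f::'a \<Rightarrow>\<^sub>L real. norm f \<le> 1 \<and> (\<exists>K\<subseteq>M. finite K \<and> card K = n \<and> (\<forall>i\<in>K. b \<le> blinfun_apply f (x i)))"
proof -
  define r where "r = enumerate M"
  have sm: "strict_mono r" using strict_mono_enumerate[OF M] r_def by simp
  have rM: "r k \<in> M" for k using enumerate_in_set[OF M] r_def by simp
  have "wu_tilde x 0 \<le> wu (x \<circ> r) 0" unfolding wu_tilde_def using sm by (intro Inf_lower) blast
  then have bw: "ereal b < wu (x \<circ> r) 0" using wb by simp
  define E where "E f = {k. b < \<bar>blinfun_apply f ((x \<circ> r) k - 0)\<bar>}" for f :: "'a \<Rightarrow>\<^sub>L real"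
  have "\<not> (\<exists>N::nat. \<forall>f::'a \<Rightarrow>\<^sub>L real. norm f \<le> 1 \<longrightarrow> finite (E f) \<and> card (E f) \<le> N)"
  proof
    assume "\<exists>N::nat. \<forall>f::'a \<Rightarrow>\<^sub>L real. norm f \<le> 1 \<longrightarrow> finite (E f) \<and> card (E f) \<le> N"
    then have "ereal b \<in> {ereal \<epsilon> | \<epsilon>. \<epsilon> > 0 \<and>
      (\<exists>n::nat. \<forall>f :: 'a \<Rightarrow>\<^sub>L real. norm f \<le> 1 \<longrightarrow>
         finite {k. \<bar>blinfun_apply f ((x \<circ> r) k - 0)\<bar> > \<epsilon>} \<and>
         card {k. \<bar>blinfun_apply f ((x \<circ> r) k - 0)\<bar> > \<epsilon>} \<le> n)}"
      using b0 unfolding E_def by blast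
    then have "wu (x \<circ> r) 0 \<le> ereal b" unfolding wu_def by (rule Inf_lower)
    then show False using bw by simp
  qed
  then obtain f :: "'a \<Rightarrow>\<^sub>L real" where f: "norm f \<le> 1" "\<not> (finite (E f) \<and> card (E f) \<le> 2*n)" by blast
  have "(\<lambda>k. blinfun_apply f (x k)) \<longlonglongrightarrow> 0" using wn unfolding weakly_converges_def by force
  then have "((\<lambda>k. blinfun_apply f (x k)) \<circ> r) \<longlonglongrightarrow> 0" using LIMSEQ_subseq_LIMSEQ sm by blast
  then obtain N0 where N0: "\<And>k. k \<ge> N0 \<Longrightarrow> \<bar>blinfun_apply f (x (r k))\<bar> < b"
    using b0 by (auto simp: lim_sequentially dist_real_def)
  have "E f \<subseteq> {..<N0}" unfolding E_def using N0 by (force simp: not_less[symmetric])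
  then have finE: "finite (E f)" using finite_subset by blast
  then have cE: "card (E f) > 2*n" using f(2) by simp
  define Ep where "Ep = {k. b < blinfun_apply f (x (r k))}"
  define Em where "Em = {k. b < blinfun_apply (-f) (x (r k))}"
  have EU: "E f = Ep \<union> Em" unfolding E_def Ep_def Em_def by (auto simp: blinfun.minus_left abs_if)
  have finEp: "finite Ep" "finite Em" using finE EU by auto
  have "card (E f) \<le> card Ep + card Em" unfolding EU by (rule card_Un_le)
  then have "card Ep \<ge> n \<or> card Em \<ge> n" using cE by linarith
  then obtain g :: "'a \<Rightarrow>\<^sub>L real" and E' where g: "norm g \<le> 1" "finite E'" "card E' \<ge> n"
     "\<forall>k\<in>E'. b < blinfun_apply g (x (r k))"
  proof (elim disjE)
    assume h: "card Ep \<ge> n" show thesis by (rule that[of f Ep]) (use h f(1) finEp Ep_def in auto)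
  next
    assume h: "card Em \<ge> n" show thesis by (rule that[of "-f" Em]) (use h f(1) finEp Em_def in auto)
  qed
  have inj: "inj r" using strict_mono_imp_inj_on[OF sm] .
  have "card (r ` E') \<ge> n" using g(3) card_image[OF inj_on_subset[OF inj subset_UNIV]] by simp
  then obtain K where K: "K \<subseteq> r ` E'" "card K = n" using obtain_subset_with_card_n by metis
  have "finite K" using K(1) g(2) finite_subset by blast
  moreover have "K \<subseteq> M" using K(1) rM by blast
  moreover have "\<forall>i\<in>K. b \<le> blinfun_apply g (x i)" using K(1) g(4) by fastforce
  ultimately show ?thesis using g(1) K(2) by blast
qed

theorem lemma4p7:
  fixes x :: "nat \<Rightarrow> 'a::banach" and c :: real
  assumes "c > 0"
    and "weakly_converges x 0"
    and "wu_tilde x 0 > ereal c"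
  shows "\<exists>r. strict_mono r \<and> generates_l1_spreading_model (x \<circ> r) (c / 2)"
proof -
  obtain b where b: "ereal c < ereal b" "ereal b < wu_tilde x 0" using ereal_dense2[OF assms(3)] by blast
  have cb: "c < b" using b(1) by simp
  define \<eta> where "\<eta> = b - c"
  have eta: "\<eta> > 0" using cb \<eta>_def by simp
  have rich: "\<And>M n. infinite M \<Longrightarrow> \<exists>f::'a \<Rightarrow>\<^sub>L real. norm f \<le> 1 \<and>
                   (\<exists>K\<subseteq>M. finite K \<and> card K = n \<and> (\<forall>i\<in>K. b \<le> blinfun_apply f (x i)))"
    using richA[OF assms(2) _ b(2)] cb assms(1) by simp
  interpret lm x b \<eta> using assms(2) eta rich by unfold_locales auto
  obtain r where r1: "strict_mono r" and r2: "\<forall>F G. finite F \<and> F \<noteq> {} \<and> card F \<le> Min F + 1 \<and> G \<subseteq> F \<longrightarrow>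
      (\<exists>f::'a \<Rightarrow>\<^sub>L real. norm f \<le> 1 \<and> (\<forall>i\<in>G. b \<le> blinfun_apply f (x (r i))) \<and>
         (\<forall>i\<in>F - G. blinfun_apply f (x (r i)) \<le> \<eta>))"
    using construct by blast
  have r: "strict_mono r"
    "\<And>F G. finite F \<Longrightarrow> F \<noteq> {} \<Longrightarrow> card F \<le> Min F + 1 \<Longrightarrow> G \<subseteq> F \<Longrightarrow>
      (\<exists>f::'a \<Rightarrow>\<^sub>L real. norm f \<le> 1 \<and> (\<forall>i\<in>G. b \<le> blinfun_apply f (x (r i))) \<and>
         (\<forall>i\<in>F - G. blinfun_apply f (x (r i)) \<le> \<eta>))"
    using r1 apply blast
    using r2 by blast
  have bdd: "bounded (range (x \<circ> r))"
    using weakly_null_bounded[OF assms(2)] by (rule bounded_subset) auto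
  have est: "c / 2 * (\<Sum>i\<in>F. \<bar>\<alpha> i\<bar>) \<le> norm (\<Sum>i\<in>F. \<alpha> i *\<^sub>R (x \<circ> r) i)"
    if F: "finite F" "F \<noteq> {}" "card F \<le> Min F + 1" for F and \<alpha> :: "nat \<Rightarrow> real"
  proof -
    define v where "v = (\<Sum>i\<in>F. \<alpha> i *\<^sub>R (x \<circ> r) i)"
    obtain f :: "'a \<Rightarrow>\<^sub>L real" where f: "norm f \<le> 1" "\<forall>i\<in>{i\<in>F. \<alpha> i > 0}. b \<le> blinfun_apply f (x (r i))"
      "\<forall>i\<in>F - {i\<in>F. \<alpha> i > 0}. blinfun_apply f (x (r i)) \<le> \<eta>"
      using r(2)[OF F, of "{i\<in>F. \<alpha> i > 0}"] by blast
    obtain g :: "'a \<Rightarrow>\<^sub>L real" where g: "norm g \<le> 1" "\<forall>i\<in>{i\<in>F. \<alpha> i < 0}. b \<le> blinfun_apply g (x (r i))"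
      "\<forall>i\<in>F - {i\<in>F. \<alpha> i < 0}. blinfun_apply g (x (r i)) \<le> \<eta>"
      using r(2)[OF F, of "{i\<in>F. \<alpha> i < 0}"] by blast
    have fv: "blinfun_apply f v = (\<Sum>i\<in>F. \<alpha> i * blinfun_apply f (x (r i)))"
      unfolding v_def by (simp add: blinfun.sum_right blinfun.scaleR_right)
    have gv: "blinfun_apply g v = (\<Sum>i\<in>F. \<alpha> i * blinfun_apply g (x (r i)))"
      unfolding v_def by (simp add: blinfun.sum_right blinfun.scaleR_right)
    have trm: "(b - \<eta>) * \<bar>\<alpha> i\<bar> \<le> \<alpha> i * blinfun_apply f (x (r i)) - \<alpha> i * blinfun_apply g (x (r i))"
      if i: "i \<in> F" for i
    proof -
      consider "\<alpha> i > 0" | "\<alpha> i < 0" | "\<alpha> i = 0" by linarith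
      then show ?thesis
      proof cases
        case 1
        have "\<alpha> i * b \<le> \<alpha> i * blinfun_apply f (x (r i))" using f(2) i 1 by (intro mult_left_mono) auto
        moreover have "\<alpha> i * blinfun_apply g (x (r i)) \<le> \<alpha> i * \<eta>" using g(3) i 1 by (intro mult_left_mono) auto
        moreover have "(b - \<eta>) * \<bar>\<alpha> i\<bar> = \<alpha> i * b - \<alpha> i * \<eta>" using 1 by (simp add: algebra_simps)
        ultimately show ?thesis by linarith
      next
        case 2
        have "(- \<alpha> i) * blinfun_apply f (x (r i)) \<le> (- \<alpha> i) * \<eta>" using f(3) i 2 by (intro mult_left_mono) auto
        moreover have "(- \<alpha> i) * b \<le> (- \<alpha> i) * blinfun_apply g (x (r i))" using g(2) i 2 by (intro mult_left_mono) auto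
        moreover have "(b - \<eta>) * \<bar>\<alpha> i\<bar> = (- \<alpha> i) * b - (- \<alpha> i) * \<eta>" using 2 by (simp add: algebra_simps)
        ultimately show ?thesis by (simp add: algebra_simps)
      qed simp
    qed
    have s1: "(b - \<eta>) * (\<Sum>i\<in>F. \<bar>\<alpha> i\<bar>) \<le> blinfun_apply f v - blinfun_apply g v"
      unfolding fv gv sum_distrib_left sum_subtractf[symmetric] by (rule sum_mono) (rule trm)
    have s2: "blinfun_apply f v \<le> norm v"
      using norm_blinfun[of f v] f(1) by (smt (verit) mult_left_le_one_le norm_ge_zero real_norm_def)
    have s3: "- blinfun_apply g v \<le> norm v"
      using norm_blinfun[of g v] g(1) by (smt (verit) mult_left_le_one_le norm_ge_zero real_norm_def)
    from s1 s2 s3 have "(b - \<eta>) * (\<Sum>i\<in>F. \<bar>\<alpha> i\<bar>) \<le> 2 * norm v" by linarith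
    moreover have "b - \<eta> = c" using \<eta>_def by simp
    ultimately show ?thesis unfolding v_def by simp
  qed
  have "generates_l1_spreading_model (x \<circ> r) (c / 2)"
    unfolding generates_l1_spreading_model_def using bdd est by blast
  then show ?thesis using r(1) by blast
qed

end
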